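(* Let $0<\rho<\mu$, let $\beta$ be the unique real with $\rho(\beta)=\rho$, let $\ell\in\mathbb{N}$ be such that $t=\ell\rho$ is an integer, and let $0<\varepsilon<1$. Let $X_\beta$ have distribution $P_\beta$ and set $$\delta=\ell^{1/2}\,\frac{\mathrm{Var}(\mathrm{wt}_{\mathcal{A}}(X_\beta))^{1/2}}{(1-\varepsilon)^{1/2}}.$$ Then $$\sum_{\substack{j\in\mathbb{Z}\\ -\delta<j<\delta}}\bigl|\mathcal{S}^\ell_{t+j}\bigr|\ \ge\ \varepsilon\, q^{\ell H_\rho-|\beta|\delta}.$$
   Context: Let $q>1$ be fixed. Let $\mathcal{A}$ be a finite abelian group with $|\mathcal{A}|\ge 2$ and $\mathrm{wt}_{\mathcal{A}}:\mathcal{A}\to\mathbb{Z}_{\ge 0}$ a weight function with $\mathrm{wt}_{\mathcal{A}}(a)=0$ iff $a=0$, extended additively to $\mathcal{A}^\ell$ by $\mathrm{wt}_{\Sigma\mathcal{A}}(v)=\sum_{i=1}^\ell\mathrm{wt}_{\mathcal{A}}(v_i)$. For an integer $s$, $\mathcal{S}^\ell_s=\{v\in\mathcal{A}^\ell:\mathrm{wt}_{\Sigma\mathcal{A}}(v)=s\}$. Let $\mu=\max_a\mathrm{wt}_{\mathcal{A}}(a)$. For $\beta\in\mathbb{R}$ let $P_\beta(a)=q^{-\beta\,\mathrm{wt}_{\mathcal{A}}(a)}/\mathcal{Z}(\beta)$, $\mathcal{Z}(\beta)=\sum_aq^{-\beta\,\mathrm{wt}_{\mathcal{A}}(a)}$,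 $\rho(\beta)=\sum_aP_\beta(a)\mathrm{wt}_{\mathcal{A}}(a)$; $\rho$ is a bijection $\mathbb{R}\to(0,\mu)$. For $\rho=\rho(\beta)$, $H_\rho=-\sum_{a:P_\beta(a)\ne0}P_\beta(a)\log_qP_\beta(a)$. *)

theory Defs
  imports Complex_Main
begin

definition Zpart :: "real \<Rightarrow> ('a::finite \<Rightarrow> nat) \<Rightarrow> real \<Rightarrow> real" where
  "Zpart q wt \<beta> = (\<Sum>a\<in>UNIV. q powr (- \<beta> * real (wt a)))"

definition Pbeta :: "real \<Rightarrow> ('a::finite \<Rightarrow> nat) \<Rightarrow> real \<Rightarrow> 'a \<Rightarrow> real" where
  "Pbeta q wt \<beta> a = q powr (- \<beta> * real (wt a)) / Zpart q wt \<beta>"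

definition rhoF :: "real \<Rightarrow> ('a::finite \<Rightarrow> nat) \<Rightarrow> real \<Rightarrow> real" where
  "rhoF q wt \<beta> = (\<Sum>a\<in>UNIV. Pbeta q wt \<beta> a * real (wt a))"

definition varF :: "real \<Rightarrow> ('a::finite \<Rightarrow> nat) \<Rightarrow> real \<Rightarrow> real" where
  "varF q wt \<beta> = (\<Sum>a\<in>UNIV. Pbeta q wt \<beta> a * (real (wt a) - rhoF q wt \<beta>)\<^sup>2)"

definition entropyF :: "real \<Rightarrow> ('a::finite \<Rightarrow> nat) \<Rightarrow> real \<Rightarrow> real" where
  "entropyF q wt \<beta> = - (\<Sum>a\<in>{a. Pbeta q wt \<beta> a \<noteq> 0}. Pbeta q wt \<beta> a * log q (Pbeta q wt \<beta> a))"

definition muF :: "('a::finite \<Rightarrow> nat) \<Rightarrow> nat" where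
  "muF wt = Max (range wt)"

definition sphere :: "('a \<Rightarrow> nat) \<Rightarrow> nat \<Rightarrow> int \<Rightarrow> 'a list set" where
  "sphere wt l s = {v. length v = l \<and> int (\<Sum>x\<leftarrow>v. wt x) = s}"

end

theory Submission
  imports Defs
begin

lemma finL: "finite {v::('a::finite) list. length v = n}"
  using finite_lists_length_eq[of "UNIV::'a set" n] by simp

lemma sumL_Suc:
  fixes F :: "('a::finite) list \<Rightarrow> real"
  shows "(\<Sum>v\<in>{v. length v = Suc n}. F v) = (\<Sum>a\<in>UNIV. \<Sum>v\<in>{v. length v = n}. F (a#v))"
proof -
  have e: "{v::'a list. length v = Suc n} = (\<lambda>(xs, a). a#xs) ` ({v. length v = n} \<times> UNIV)"
    using lists_length_Suc_eq[of "UNIV::'a set" n] by simp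
  have "(\<Sum>v\<in>{v. length v = Suc n}. F v) = (\<Sum>x\<in>{v. length v = n} \<times> (UNIV::'a set). F (snd x # fst x))"
    unfolding e by (subst sum.reindex[OF inj_split_Cons]) (simp add: case_prod_beta)
  also have "\<dots> = (\<Sum>v\<in>{v. length v = n}. \<Sum>a\<in>UNIV. F (a#v))"
    by (simp add: sum.cartesian_product case_prod_beta)
  also have "\<dots> = (\<Sum>a\<in>UNIV. \<Sum>v\<in>{v. length v = n}. F (a#v))"
    by (rule sum.swap)
  finally show ?thesis .
qed

lemma moments:
  fixes p d :: "('a::finite) \<Rightarrow> real"
  assumes s1: "(\<Sum>a\<in>UNIV. p a) = 1" and s2: "(\<Sum>a\<in>UNIV. p a * d a) = 0"
  shows "(\<Sum>v\<in>{v. length v = n}. prod_list (map p v)) = 1 \<and>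
         (\<Sum>v\<in>{v. length v = n}. prod_list (map p v) * sum_list (map d v)) = 0 \<and>
         (\<Sum>v\<in>{v. length v = n}. prod_list (map p v) * (sum_list (map d v))\<^sup>2)
            = real n * (\<Sum>a\<in>UNIV. p a * (d a)\<^sup>2)"
proof (induction n)
  case 0
  have "{v::'a list. length v = 0} = {[]}" by auto
  then show ?case by simp
next
  case (Suc n)
  let ?L = "{v::'a list. length v = n}"
  let ?P = "\<lambda>v. prod_list (map p v)" and ?D = "\<lambda>v. sum_list (map d v)"
  from Suc.IH have I1: "(\<Sum>v\<in>?L. ?P v) = 1" and I2: "(\<Sum>v\<in>?L. ?P v * ?D v) = 0"
    and I3: "(\<Sum>v\<in>?L. ?P v * (?D v)\<^sup>2) = real n * (\<Sum>a\<in>UNIV. p a * (d a)\<^sup>2)" by auto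
  have A: "(\<Sum>v\<in>{v. length v = Suc n}. ?P v) = 1"
    by (simp add: sumL_Suc sum_distrib_left[symmetric] I1 s1)
  have B: "(\<Sum>v\<in>{v. length v = Suc n}. ?P v * ?D v) = 0"
  proof -
    have "(\<Sum>v\<in>{v. length v = Suc n}. ?P v * ?D v)
       = (\<Sum>a\<in>UNIV. p a * d a * (\<Sum>v\<in>?L. ?P v) + p a * (\<Sum>v\<in>?L. ?P v * ?D v))"
      by (simp add: sumL_Suc sum_distrib_left algebra_simps sum.distrib)
    also have "\<dots> = 0" using I1 I2 s2 by simp
    finally show ?thesis .
  qed
  have C: "(\<Sum>v\<in>{v. length v = Suc n}. ?P v * (?D v)\<^sup>2) = real (Suc n) * (\<Sum>a\<in>UNIV. p a * (d a)\<^sup>2)"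
  proof -
    have "(\<Sum>v\<in>{v. length v = Suc n}. ?P v * (?D v)\<^sup>2)
       = (\<Sum>a\<in>UNIV. p a * (d a)\<^sup>2 * (\<Sum>v\<in>?L. ?P v) + 2 * (p a * d a) * (\<Sum>v\<in>?L. ?P v * ?D v)
            + p a * (\<Sum>v\<in>?L. ?P v * (?D v)\<^sup>2))"
      by (simp add: sumL_Suc sum_distrib_left algebra_simps sum.distrib power2_eq_square)
    also have "\<dots> = (\<Sum>a\<in>UNIV. p a * (d a)\<^sup>2) + real n * (\<Sum>a\<in>UNIV. p a * (d a)\<^sup>2)"
      using I1 I2 I3 s1 by (simp add: sum.distrib sum_distrib_right[symmetric])
    also have "\<dots> = real (Suc n) * (\<Sum>a\<in>UNIV. p a * (d a)\<^sup>2)" by (simp add: algebra_simps)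
    finally show ?thesis .
  qed
  show ?case using A B C by blast
qed


lemma sumlist_shift:
  fixes wt :: "'a \<Rightarrow> nat"
  shows "sum_list (map (\<lambda>a. real (wt a) - r) v) = real (sum_list (map wt v)) - real (length v) * r"
  by (induction v) (simp_all add: algebra_simps)

lemma prodlist_powr:
  fixes wt :: "'a \<Rightarrow> nat"
  assumes "q > 0"
  shows "prod_list (map (\<lambda>a. q powr (- b * real (wt a)) / Z) v)
       = q powr (- b * real (sum_list (map wt v))) / Z ^ length v"
proof (induction v)
  case (Cons a v)
  have "q powr (- b * real (wt a)) * q powr (- b * real (sum_list (map wt v)))
      = q powr (- b * real (sum_list (map wt (a # v))))"
    by (simp add: powr_add[symmetric] algebra_simps)
  then show ?case using Cons assms by simp
qed (use assms in simp)

theorem mainTheorem7: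
  fixes q :: real and wt :: "'a::{finite, ab_group_add} \<Rightarrow> nat"
    and \<rho> \<beta> \<epsilon> :: real and l :: nat and t :: int
  assumes "q > 1"
    and "card (UNIV :: 'a set) \<ge> 2"
    and "\<And>a. wt a = 0 \<longleftrightarrow> a = 0"
    and "0 < \<rho>" and "\<rho> < real (muF wt)"
    and "rhoF q wt \<beta> = \<rho>"
    and "l \<ge> 1"
    and "real_of_int t = real l * \<rho>"
    and "0 < \<epsilon>" and "\<epsilon> < 1"
  shows "(\<Sum>j\<in>{j::int. - (sqrt (real l) * sqrt (varF q wt \<beta>) / sqrt (1 - \<epsilon>)) < real_of_int j
                      \<and> real_of_int j < sqrt (real l) * sqrt (varF q wt \<beta>) / sqrt (1 - \<epsilon>)}.
            real (card (sphere wt l (t + j))))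
         \<ge> \<epsilon> * q powr (real l * entropyF q wt \<beta>
                  - \<bar>\<beta>\<bar> * (sqrt (real l) * sqrt (varF q wt \<beta>) / sqrt (1 - \<epsilon>)))"
proof -
  note q1 = \<open>q > 1\<close>
  define Z where "Z = Zpart q wt \<beta>"
  define p where "p = Pbeta q wt \<beta>"
  define \<sigma> where "\<sigma> = varF q wt \<beta>"
  define \<delta> where "\<delta> = sqrt (real l) * sqrt \<sigma> / sqrt (1 - \<epsilon>)"
  define H where "H = entropyF q wt \<beta>"
  define L where "L = {v::'a list. length v = l}"
  have finL': "finite L" unfolding L_def by (rule finL)
  have Zpos: "Z > 0" unfolding Z_def Zpart_def
    using q1 by (intro sum_pos) auto
  have pdef: "\<And>a. p a = q powr (- \<beta> * real (wt a)) / Z"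
    unfolding p_def Pbeta_def Z_def by simp
  have ppos: "\<And>a. p a > 0" using Zpos q1 by (simp add: pdef)
  have s1: "(\<Sum>a\<in>UNIV. p a) = 1"
    using Zpos by (simp add: pdef sum_divide_distrib[symmetric] Z_def Zpart_def)
  have rho: "(\<Sum>a\<in>UNIV. p a * real (wt a)) = \<rho>"
    using \<open>rhoF q wt \<beta> = \<rho>\<close> by (simp add: rhoF_def p_def)
  have s2: "(\<Sum>a\<in>UNIV. p a * (real (wt a) - \<rho>)) = 0"
  proof -
    have "(\<Sum>a\<in>UNIV. p a * (real (wt a) - \<rho>)) = (\<Sum>a\<in>UNIV. p a * real (wt a)) - \<rho> * (\<Sum>a\<in>UNIV. p a)"
      by (simp add: right_diff_distrib sum_subtractf sum_distrib_left mult.commute)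
    thus ?thesis using rho s1 by simp
  qed
  have sig: "\<sigma> = (\<Sum>a\<in>UNIV. p a * (real (wt a) - \<rho>)\<^sup>2)"
    unfolding \<sigma>_def varF_def p_def using \<open>rhoF q wt \<beta> = \<rho>\<close> by simp
  have sigpos: "\<sigma> > 0"
  proof (rule ccontr)
    assume "\<not> \<sigma> > 0"
    moreover have "\<sigma> \<ge> 0" unfolding sig using ppos by (intro sum_nonneg) (simp add: less_imp_le)
    ultimately have "\<sigma> = 0" by simp
    hence "\<forall>a\<in>UNIV. p a * (real (wt a) - \<rho>)\<^sup>2 = 0"
      unfolding sig using ppos by (subst sum_nonneg_eq_0_iff[symmetric]) (auto simp: less_imp_le)
    hence "p 0 * (real (wt 0) - \<rho>)\<^sup>2 = 0" by simp
    moreover have "wt 0 = 0" using assms(3) by simp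
    ultimately show False using ppos[of 0] \<open>0 < \<rho>\<close> by simp
  qed
  have eps1: "1 - \<epsilon> > 0" using \<open>\<epsilon> < 1\<close> by simp
  have dpos: "\<delta> > 0" unfolding \<delta>_def using sigpos eps1 \<open>l \<ge> 1\<close> by simp
  have d2: "\<delta>\<^sup>2 = real l * \<sigma> / (1 - \<epsilon>)"
    unfolding \<delta>_def using sigpos eps1 by (simp add: power_divide power_mult_distrib)
  define P where "P = (\<lambda>v. prod_list (map p v))"
  define D where "D = (\<lambda>v. sum_list (map (\<lambda>a. real (wt a) - \<rho>) v))"
  from moments[OF s1 s2, of l]
  have M1: "(\<Sum>v\<in>L. P v) = 1" and M3: "(\<Sum>v\<in>L. P v * (D v)\<^sup>2) = real l * \<sigma>"
    unfolding P_def D_def L_def sig by auto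
  have Dv: "\<And>v. v \<in> L \<Longrightarrow> D v = real (sum_list (map wt v)) - real_of_int t"
    unfolding D_def L_def using assms(8) by (simp add: sumlist_shift)
  have Pv: "\<And>v. v \<in> L \<Longrightarrow> P v = q powr (- \<beta> * real (sum_list (map wt v))) / Z ^ l"
  proof -
    fix v assume "v \<in> L"
    have pe: "p = (\<lambda>a. q powr (- \<beta> * real (wt a)) / Z)" by (rule ext) (simp add: pdef)
    thus "P v = q powr (- \<beta> * real (sum_list (map wt v))) / Z ^ l"
      using prodlist_powr[of q \<beta> wt Z v] q1 \<open>v \<in> L\<close> unfolding P_def L_def pe by simp
  qed
  have Pnn: "\<And>v. P v \<ge> 0" unfolding P_def using ppos
    by (intro prod_list_nonneg) (auto simp: less_imp_le)
  define S where "S = {v\<in>L. \<bar>D v\<bar> < \<delta>}"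
  have finS: "finite S" unfolding S_def using finL' by simp
  have SL: "S \<subseteq> L" unfolding S_def by auto
  have tail: "(\<Sum>v\<in>L - S. P v) \<le> 1 - \<epsilon>"
  proof -
    have "(\<Sum>v\<in>L - S. P v) \<le> (\<Sum>v\<in>L - S. P v * (D v)\<^sup>2 / \<delta>\<^sup>2)"
    proof (rule sum_mono)
      fix v assume "v \<in> L - S"
      hence "\<bar>D v\<bar> \<ge> \<delta>" unfolding S_def by auto
      hence "\<delta>\<^sup>2 \<le> (D v)\<^sup>2" using dpos
        by (metis abs_ge_zero abs_of_pos power2_abs power_mono less_imp_le)
      hence "1 \<le> (D v)\<^sup>2 / \<delta>\<^sup>2" using dpos by simp
      thus "P v \<le> P v * (D v)\<^sup>2 / \<delta>\<^sup>2"
        using Pnn[of v] mult_left_mono[of 1 "(D v)\<^sup>2 / \<delta>\<^sup>2" "P v"] by simp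
    qed
    also have "\<dots> \<le> (\<Sum>v\<in>L. P v * (D v)\<^sup>2 / \<delta>\<^sup>2)"
      using finL' Pnn by (intro sum_mono2) auto
    also have "\<dots> = real l * \<sigma> / \<delta>\<^sup>2" using M3 by (simp add: sum_divide_distrib[symmetric])
    also have "\<dots> = 1 - \<epsilon>" using d2 sigpos eps1 \<open>l \<ge> 1\<close> by simp
    finally show ?thesis .
  qed
  have "(\<Sum>v\<in>L. P v) = (\<Sum>v\<in>S. P v) + (\<Sum>v\<in>L - S. P v)"
    using finL' SL by (metis add.commute sum.subset_diff)
  hence Seps: "(\<Sum>v\<in>S. P v) \<ge> \<epsilon>" using M1 tail by simp
  define C where "C = q powr (- \<beta> * real_of_int t + \<bar>\<beta>\<bar> * \<delta>) / Z ^ l"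
  have PC: "\<And>v. v \<in> S \<Longrightarrow> P v \<le> C"
  proof -
    fix v assume v: "v \<in> S"
    hence vL: "v \<in> L" and Dd: "\<bar>D v\<bar> < \<delta>" unfolding S_def by auto
    have "- \<beta> * D v \<le> \<bar>\<beta>\<bar> * \<bar>D v\<bar>" by (metis abs_ge_self abs_minus_cancel abs_mult)
    also have "\<dots> \<le> \<bar>\<beta>\<bar> * \<delta>" using Dd by (intro mult_left_mono) auto
    finally have "- \<beta> * real (sum_list (map wt v)) \<le> - \<beta> * real_of_int t + \<bar>\<beta>\<bar> * \<delta>"
      using Dv[OF vL] by (simp add: algebra_simps)
    hence "q powr (- \<beta> * real (sum_list (map wt v))) \<le> q powr (- \<beta> * real_of_int t + \<bar>\<beta>\<bar> * \<delta>)"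
      using q1 by (intro powr_mono) auto
    thus "P v \<le> C" unfolding C_def using Pv[OF vL] Zpos by (simp add: divide_right_mono)
  qed
  have "\<epsilon> \<le> real (card S) * C"
    using Seps sum_mono[of S P "\<lambda>_. C", OF PC] by simp
  define J where "J = {j::int. - \<delta> < real_of_int j \<and> real_of_int j < \<delta>}"
  have finJ: "finite J"
  proof (rule finite_subset)
    show "J \<subseteq> {-\<lceil>\<delta>\<rceil>..\<lceil>\<delta>\<rceil>}"
    proof
      fix j assume "j \<in> J"
      hence "- \<delta> < real_of_int j" "real_of_int j < \<delta>" unfolding J_def by auto
      moreover have "\<delta> \<le> real_of_int \<lceil>\<delta>\<rceil>" by (rule le_of_int_ceiling)
      ultimately have "real_of_int (-\<lceil>\<delta>\<rceil>) \<le> real_of_int j" "real_of_int j \<le> real_of_int \<lceil>\<delta>\<rceil>"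
        by linarith+
      thus "j \<in> {-\<lceil>\<delta>\<rceil>..\<lceil>\<delta>\<rceil>}" by (simp only: of_int_le_iff atLeastAtMost_iff)
    qed
  qed simp
  have SU: "S = (\<Union>j\<in>J. sphere wt l (t + j))"
  proof
    show "S \<subseteq> (\<Union>j\<in>J. sphere wt l (t + j))"
    proof
      fix v assume v: "v \<in> S"
      hence vL: "v \<in> L" and Dd: "\<bar>D v\<bar> < \<delta>" unfolding S_def by auto
      define j where "j = int (sum_list (map wt v)) - t"
      have "real_of_int j = D v" using Dv[OF vL] by (simp add: j_def)
      hence "j \<in> J" using Dd unfolding J_def by auto
      moreover have "v \<in> sphere wt l (t + j)" using vL by (simp add: sphere_def L_def j_def)
      ultimately show "v \<in> (\<Union>j\<in>J. sphere wt l (t + j))" by blast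
    qed
  next
    show "(\<Union>j\<in>J. sphere wt l (t + j)) \<subseteq> S"
    proof
      fix v assume "v \<in> (\<Union>j\<in>J. sphere wt l (t + j))"
      then obtain j where j: "j \<in> J" and v: "v \<in> sphere wt l (t + j)" by blast
      have vL: "v \<in> L" using v by (simp add: sphere_def L_def)
      have "int (sum_list (map wt v)) = t + j" using v by (simp add: sphere_def)
      hence "real (sum_list (map wt v)) = real_of_int t + real_of_int j"
        by (metis of_int_add of_int_of_nat_eq)
      hence "D v = real_of_int j" using Dv[OF vL] by simp
      thus "v \<in> S" using j vL unfolding S_def J_def by auto
    qed
  qed
  have finsph: "\<And>j. finite (sphere wt l (t + j))"
    by (rule finite_subset[OF _ finL']) (auto simp: sphere_def L_def)
  have cardS: "card S = (\<Sum>j\<in>J. card (sphere wt l (t + j)))"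
    unfolding SU using finJ finsph
    by (intro card_UN_disjoint) (auto simp: sphere_def)
  have Hval: "H = \<beta> * \<rho> + log q Z"
  proof -
    have nz: "{a. p a \<noteq> 0} = UNIV" using ppos by (auto simp: less_imp_neq[symmetric])
    have lg: "\<And>a. log q (p a) = - \<beta> * real (wt a) - log q Z"
      using q1 Zpos by (simp add: pdef log_divide log_powr_cancel)
    have "H = - (\<Sum>a\<in>UNIV. p a * log q (p a))"
      unfolding H_def entropyF_def p_def[symmetric] nz ..
    also have "\<dots> = \<beta> * (\<Sum>a\<in>UNIV. p a * real (wt a)) + log q Z * (\<Sum>a\<in>UNIV. p a)"
      by (simp add: lg algebra_simps sum.distrib sum_distrib_left sum_distrib_right sum_subtractf sum_negf)
    finally show ?thesis using rho s1 by simp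
  qed
  have qH: "q powr (real l * H) = q powr (\<beta> * real_of_int t) * Z ^ l"
  proof -
    have "q powr (real l * H) = q powr (\<beta> * real_of_int t) * q powr (log q Z * real l)"
      unfolding Hval using assms(8) by (simp add: algebra_simps powr_add)
    also have "q powr (log q Z * real l) = Z ^ l"
      using q1 Zpos by (simp add: powr_powr[symmetric] powr_realpow)
    finally show ?thesis .
  qed
  have "\<epsilon> * q powr (real l * H - \<bar>\<beta>\<bar> * \<delta>) = \<epsilon> * (Z ^ l * q powr (\<beta> * real_of_int t - \<bar>\<beta>\<bar> * \<delta>))"
    using qH by (simp add: powr_diff powr_add)
  also have "\<dots> \<le> real (card S) * C * (Z ^ l * q powr (\<beta> * real_of_int t - \<bar>\<beta>\<bar> * \<delta>))"
    using \<open>\<epsilon> \<le> real (card S) * C\<close> Zpos by (intro mult_right_mono) auto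
  also have "\<dots> = real (card S)"
  proof -
    have "q powr (- \<beta> * real_of_int t + \<bar>\<beta>\<bar> * \<delta>) * q powr (\<beta> * real_of_int t - \<bar>\<beta>\<bar> * \<delta>) = 1"
      using q1 by (simp add: powr_add[symmetric])
    thus ?thesis unfolding C_def using Zpos by (simp add: field_simps)
  qed
  finally show ?thesis
    unfolding cardS of_nat_sum J_def \<delta>_def H_def \<sigma>_def by simp
qed

end
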